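(* There exists a pair of unbiased weighing matrices of order $13$ and weight $9$.
   Context: A weighing matrix of order $n$ and weight $k$ is an $n\times n$ matrix $W$ with entries in $\{1,-1,0\}$ such that $WW^T=kI_n$. Two weighing matrices $W_1,W_2$ of order $n$ and weight $k$ are unbiased if $\frac{1}{\sqrt{k}}W_1W_2^T$ is also a weighing matrix of order $n$ and weight $k$. *)

theory Defs
  imports "HOL-Analysis.Analysis" "HOL-Library.Numeral_Type"
begin

definition weighing_matrix :: "real \<Rightarrow> real^'n::finite^'n \<Rightarrow> bool" where
  "weighing_matrix k W \<longleftrightarrow>
     (\<forall>i j. W $ i $ j \<in> {1, -1, 0}) \<and> W ** transpose W = k *\<^sub>R mat 1"

definition unbiased_weighing :: "real \<Rightarrow> real^'n::finite^'n \<Rightarrow> real^'n^'n \<Rightarrow> bool" where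
  "unbiased_weighing k W1 W2 \<longleftrightarrow>
     weighing_matrix k W1 \<and> weighing_matrix k W2 \<and>
     weighing_matrix k ((1 / sqrt k) *\<^sub>R (W1 ** transpose W2))"

end

theory Submission
  imports Defs
begin

definition v1 :: "int list" where "v1 = [0, 0, 1, 0, 1, 1, 1, -1, -1, 0, 1, -1, 1]"
definition v2 :: "int list" where "v2 = [0, 1, -1, 1, 1, -1, -1, 0, 0, 1, 1, 0, 1]"
definition vb :: "int list" where "vb = [0, 1, 1, 1, -1, 1, 1, 0, 0, 1, -1, 0, -1]"
definition ent :: "int list \<Rightarrow> int \<Rightarrow> int \<Rightarrow> int" where "ent v a b = v ! nat ((b - a) mod 13)"

definition cm :: "int list \<Rightarrow> real^13^13" where
  "cm v = (\<chi> i j. real_of_int (ent v (Rep_bit1 i) (Rep_bit1 j)))"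

lemma conv:
  assumes "list_all (\<lambda>a. list_all (\<lambda>b. sum_list (map (\<lambda>k. f a b k) [0..12]) = c a b) [0..12]) [0..12::int]"
  shows "\<forall>a\<in>{0..<13::int}. \<forall>b\<in>{0..<13::int}. (\<Sum>k\<in>{0..<13::int}. f a b k) = c a b"
proof -
  have e: "{0..<13::int} = {0..12}" by auto
  show ?thesis using assms unfolding e list_all_iff
    by (simp add: sum_list_distinct_conv_sum_set)
qed

lemma c1: "\<forall>a\<in>{0..<13::int}. \<forall>b\<in>{0..<13::int}. (\<Sum>k\<in>{0..<13::int}. ent v1 a k * ent v1 b k) = (if a = b then 9 else 0)"
  by (rule conv) code_simp
lemma c2: "\<forall>a\<in>{0..<13::int}. \<forall>b\<in>{0..<13::int}. (\<Sum>k\<in>{0..<13::int}. ent v2 a k * ent v2 b k) = (if a = b then 9 else 0)"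
  by (rule conv) code_simp
lemma cb: "\<forall>a\<in>{0..<13::int}. \<forall>b\<in>{0..<13::int}. (\<Sum>k\<in>{0..<13::int}. ent vb a k * ent vb b k) = (if a = b then 9 else 0)"
  by (rule conv) code_simp
lemma c12: "\<forall>a\<in>{0..<13::int}. \<forall>b\<in>{0..<13::int}. (\<Sum>k\<in>{0..<13::int}. ent v1 a k * ent v2 b k) = 3 * ent vb a b"
  by (rule conv) code_simp

lemma bij13: "bij_betw (Rep_bit1 :: 13 \<Rightarrow> int) UNIV {0..<13}"
proof -
  have "bij_betw (Rep_bit1 :: 13 \<Rightarrow> int) UNIV {0..<1 + 2 * int CARD(6)}"
    unfolding bij_betw_def
    using type_definition.Rep_range[OF type_definition_bit1] Rep_bit1_inject
    by (auto simp: inj_on_def)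
  then show ?thesis by simp
qed

lemma rep_range: "Rep_bit1 (i :: 13) \<in> {0..<13}"
  using bij13 bij_betwE by blast

lemma sum13: "(\<Sum>k\<in>UNIV. g (Rep_bit1 (k::13))) = (\<Sum>k\<in>{0..<13::int}. g k)"
  using sum.reindex_bij_betw[OF bij13] by blast

lemma prod_cm:
  assumes "\<forall>a\<in>{0..<13::int}. \<forall>b\<in>{0..<13::int}. (\<Sum>k\<in>{0..<13::int}. ent v a k * ent w b k) = c a b"
  shows "cm v ** transpose (cm w) = (\<chi> i j. real_of_int (c (Rep_bit1 i) (Rep_bit1 j)))"
proof -
  { fix i j :: 13
    have "(cm v ** transpose (cm w)) $ i $ j
        = (\<Sum>k::13\<in>UNIV. real_of_int (ent v (Rep_bit1 i) (Rep_bit1 k) * ent w (Rep_bit1 j) (Rep_bit1 k)))"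
      by (simp add: matrix_matrix_mult_def transpose_def cm_def)
    also have "\<dots> = real_of_int (\<Sum>k\<in>{0..<13::int}. ent v (Rep_bit1 i) k * ent w (Rep_bit1 j) k)"
      using sum13[where g = "\<lambda>k. real_of_int (ent v (Rep_bit1 i) k * ent w (Rep_bit1 j) k)"] by simp
    also have "\<dots> = real_of_int (c (Rep_bit1 i) (Rep_bit1 j))"
      using assms rep_range by simp
    finally have "(cm v ** transpose (cm w)) $ i $ j = real_of_int (c (Rep_bit1 i) (Rep_bit1 j))" . }
  then show ?thesis by (simp add: vec_eq_iff)
qed

lemma entries:
  assumes "set v \<subseteq> {1, -1, 0}" "length v = 13"
  shows "\<forall>i j. cm v $ i $ j \<in> {1, -1, 0}"
proof (intro allI)
  fix i j :: 13
  have "nat ((Rep_bit1 j - Rep_bit1 i) mod 13) < 13" by simp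
  then have "ent v (Rep_bit1 i) (Rep_bit1 j) \<in> {1, -1, 0}"
    unfolding ent_def using assms nth_mem by (metis subsetD)
  then show "cm v $ i $ j \<in> {1, -1, 0}" by (auto simp: cm_def)
qed

lemma weigh:
  assumes "set v \<subseteq> {1, -1, 0}" "length v = 13"
    "\<forall>a\<in>{0..<13::int}. \<forall>b\<in>{0..<13::int}. (\<Sum>k\<in>{0..<13::int}. ent v a k * ent v b k) = (if a = b then 9 else 0)"
  shows "weighing_matrix 9 (cm v)"
  unfolding weighing_matrix_def
proof
  show "\<forall>i j. cm v $ i $ j \<in> {1, -1, 0}" using entries[OF assms(1,2)] .
  show "cm v ** transpose (cm v) = 9 *\<^sub>R mat 1"
    using prod_cm[OF assms(3)] by (simp add: vec_eq_iff mat_def Rep_bit1_inject)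
qed

theorem proposition6p2:
  shows "\<exists>W1 W2 :: real^13^13. unbiased_weighing 9 W1 W2"
proof (intro exI)
  have w1: "weighing_matrix 9 (cm v1)" by (rule weigh[OF _ _ c1]) (simp_all add: v1_def)
  have w2: "weighing_matrix 9 (cm v2)" by (rule weigh[OF _ _ c2]) (simp_all add: v2_def)
  have wb: "weighing_matrix 9 (cm vb)" by (rule weigh[OF _ _ cb]) (simp_all add: vb_def)
  have "cm v1 ** transpose (cm v2) = (\<chi> i j. real_of_int (3 * ent vb (Rep_bit1 i) (Rep_bit1 j)))"
    by (rule prod_cm[OF c12])
  then have "(1 / sqrt 9) *\<^sub>R (cm v1 ** transpose (cm v2)) = cm vb"
    by (simp add: vec_eq_iff cm_def)
  then show "unbiased_weighing 9 (cm v1) (cm v2)"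
    unfolding unbiased_weighing_def using w1 w2 wb by simp
qed

end
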